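(* Let $\gamma:I\to\mathbb{R}^2$ be a smooth curve, star-shaped with respect to the origin and parametrized so that $[\gamma(t),\gamma'(t)]=1$, and let $p$ be its centroaffine curvature, defined by $\gamma''=-p\gamma$. Assume $p(t)\neq0$ and $p'(t)\neq 0$ for all $t\in I$. Then for any $t_0\neq t_1$ in $I$, the osculating central conics of $\gamma$ at $\gamma(t_0)$ and $\gamma(t_1)$ are disjoint and nested.
   Context: $[u,v]$ denotes the determinant of the $2\times2$ matrix with columns $u,v$; a curve is star-shaped with respect to the origin if $[\gamma,\gamma']\neq0$. A central conic is a curve $Q(X,Y):=aX^2+2bXY+cY^2=1$; it is an ellipse if $ac-b^2>0$ and a hyperbola if $ac-b^2<0$. The osculating central conic of $\gamma$ at $\gamma(t)$ is the central conic tangent to $\gamma$ at $\gamma(t)$ whose determinant $ac-b^2$ equals $p(t)$; explicitly, writing $\gamma=(x,y)$, its coefficients are $a=py^2+(y')^2$, $b=-(pxy+x'y')$, $c=px^2+(x')^2$. Two central conics $Q_1=1$, $Q_2=1$ are called nested if one of the sets $\{Q_1\ge 1\}$, $\{Q_2\ge1\}$ contains the other (for ellipses this is equivalent to one of the closed regions they bound containing the other). *)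

theory Defs
  imports "HOL-Analysis.Analysis"
begin

definition smooth_on :: "real set \<Rightarrow> (real \<Rightarrow> real) \<Rightarrow> bool" where
  "smooth_on I f \<longleftrightarrow> (\<forall>n. \<forall>t\<in>I. ((deriv ^^ n) f) differentiable (at t))"

definition det2 :: "real \<times> real \<Rightarrow> real \<times> real \<Rightarrow> real" where
  "det2 u v = fst u * snd v - snd u * fst v"

definition conic_form :: "real \<times> real \<times> real \<Rightarrow> real \<times> real \<Rightarrow> real" where
  "conic_form C z = (case C of (a, b, c) \<Rightarrow> case z of (X, Y) \<Rightarrow>
      a * X^2 + 2 * b * X * Y + c * Y^2)"

definition central_conic :: "real \<times> real \<times> real \<Rightarrow> (real \<times> real) set" where
  "central_conic C = {z. conic_form C z = 1}"

definition nested_conics :: "real \<times> real \<times> real \<Rightarrow> real \<times> real \<times> real \<Rightarrow> bool" where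
  "nested_conics C1 C2 \<longleftrightarrow>
     {z. conic_form C1 z \<ge> 1} \<subseteq> {z. conic_form C2 z \<ge> 1} \<or>
     {z. conic_form C2 z \<ge> 1} \<subseteq> {z. conic_form C1 z \<ge> 1}"

definition osc_conic :: "(real \<Rightarrow> real) \<Rightarrow> (real \<Rightarrow> real) \<Rightarrow> (real \<Rightarrow> real) \<Rightarrow> real
    \<Rightarrow> real \<times> real \<times> real" where
  "osc_conic x y p t =
     (p t * (y t)^2 + (deriv y t)^2,
      - (p t * x t * y t + deriv x t * deriv y t),
      p t * (x t)^2 + (deriv x t)^2)"

end

theory Submission
  imports Defs
begin


lemma darboux_core:
  fixes g q :: "real \<Rightarrow> real"
  assumes ab: "a < b" and d: "\<forall>t\<in>{a..b}. (g has_real_derivative q t) (at t)"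
    and qa: "q a < 0" and qb: "q b > 0"
  shows "\<exists>c. a < c \<and> c < b \<and> q c = 0"
proof -
  have "continuous_on {a..b} g"
    using d by (meson DERIV_isCont continuous_at_imp_continuous_on)
  then obtain c where c: "c \<in> {a..b}" "\<forall>y\<in>{a..b}. g c \<le> g y"
    using continuous_attains_inf[of "{a..b}" g] ab by auto
  have "c \<noteq> a"
  proof
    assume "c = a"
    obtain e where e: "e > 0" "\<forall>h>0. h < e \<longrightarrow> g a > g (a + h)"
      using DERIV_neg_dec_right[OF _ qa, of g] d ab by (meson atLeastAtMost_iff less_imp_le order_refl)
    define h where "h = min (e/2) (b - a)"
    have "g a > g (a + h)" using e ab by (auto simp: h_def)
    moreover have "a + h \<in> {a..b}" using e ab by (auto simp: h_def)
    ultimately show False using c(2) \<open>c = a\<close> by (metis not_le)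
  qed
  moreover have "c \<noteq> b"
  proof
    assume "c = b"
    obtain e where e: "e > 0" "\<forall>h>0. h < e \<longrightarrow> g (b - h) < g b"
      using DERIV_pos_inc_left[OF _ qb, of g] d ab by (meson atLeastAtMost_iff less_imp_le order_refl)
    define h where "h = min (e/2) (b - a)"
    have "g b > g (b - h)" using e ab by (auto simp: h_def)
    moreover have "b - h \<in> {a..b}" using e ab by (auto simp: h_def)
    ultimately show False using c(2) \<open>c = b\<close> by (metis not_le)
  qed
  ultimately have ac: "a < c" "c < b" using c by auto
  have "q c = 0"
  proof (rule DERIV_local_min)
    show "(g has_real_derivative q c) (at c)" using d c by auto
    show "0 < min (c - a) (b - c)" using ac by auto
    show "\<forall>y. \<bar>c - y\<bar> < min (c - a) (b - c) \<longrightarrow> g c \<le> g y"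
    proof (intro allI impI)
      fix y assume "\<bar>c - y\<bar> < min (c - a) (b - c)"
      then have "y \<in> {a..b}" by (simp add: abs_less_iff)
      then show "g c \<le> g y" using c(2) by blast
    qed
  qed
  then show ?thesis using ac by auto
qed

lemma sign_const:
  fixes g q :: "real \<Rightarrow> real"
  assumes I: "is_interval I" and d: "\<forall>t\<in>I. (g has_real_derivative q t) (at t) \<and> q t \<noteq> 0"
  shows "(\<forall>t\<in>I. q t > 0) \<or> (\<forall>t\<in>I. q t < 0)"
proof (rule ccontr)
  assume A: "\<not> ?thesis"
  then obtain s where s: "s \<in> I" "\<not> q s > 0" by blast
  from A obtain t where t: "t \<in> I" "\<not> q t < 0" by blast
  have "q s \<noteq> 0" "q t \<noteq> 0" using d s t by blast+
  then have st: "q s < 0" "q t > 0" using s t by linarith+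
  have sub: "{u..v} \<subseteq> I" if "u \<in> I" "v \<in> I" for u v
    using I that unfolding is_interval_1 by (meson atLeastAtMost_iff subsetI)
  have D: "(g has_real_derivative q u) (at u)" "q u \<noteq> 0" if "u \<in> I" for u
    using d that by blast+
  have "s \<noteq> t" using st by auto
  then consider "s < t" | "t < s" by linarith
  then show False
  proof cases
    case 1
    have "\<exists>c. s < c \<and> c < t \<and> q c = 0"
    proof (rule darboux_core[where a = s and b = t and g = g and q = q])
      show "\<forall>u\<in>{s..t}. (g has_real_derivative q u) (at u)" using D(1) sub[OF s(1) t(1)] by blast
    qed (use 1 st in auto)
    then obtain c where "s < c" "c < t" "q c = 0" by blast
    moreover have "c \<in> I" using sub[OF s(1) t(1)] calculation by auto
    ultimately show False using D(2) by blast
  next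
    case 2
    have "\<exists>c. t < c \<and> c < s \<and> - q c = 0"
    proof (rule darboux_core[where a = t and b = s and g = "\<lambda>u. - g u" and q = "\<lambda>u. - q u"])
      show "\<forall>u\<in>{t..s}. ((\<lambda>u. - g u) has_real_derivative - q u) (at u)"
        using D(1) sub[OF t(1) s(1)] by (blast intro: DERIV_minus)
    qed (use 2 st in auto)
    then obtain c where "t < c" "c < s" "q c = 0" by auto
    moreover have "c \<in> I" using sub[OF t(1) s(1)] calculation by auto
    ultimately show False using D(2) by blast
  qed
qed

lemma strict_incr:
  fixes g q h k :: "real \<Rightarrow> real"
  assumes ab: "a < b"
    and dg: "\<forall>t\<in>{a..b}. (g has_real_derivative q t * (h t)^2) (at t)"
    and qp: "\<forall>t\<in>{a..b}. q t > 0"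
    and dh: "\<forall>t\<in>{a..b}. (h has_real_derivative k t) (at t)"
    and nz: "\<forall>t\<in>{a..b}. \<not> (h t = 0 \<and> k t = 0)"
  shows "g a < g b"
proof -
  have mono: "g u \<le> g v" if "a \<le> u" "u \<le> v" "v \<le> b" for u v
  proof (rule DERIV_nonneg_imp_increasing_open[OF that(2)])
    show "continuous_on {u..v} g"
      using dg that by (meson DERIV_isCont atLeastAtMost_iff continuous_at_imp_continuous_on order_trans)
    fix t assume "u < t" "t < v"
    then show "\<exists>y. (g has_real_derivative y) (at t) \<and> 0 \<le> y"
    proof (intro exI[of _ "q t * (h t)^2"] conjI)
      show "(g has_real_derivative q t * (h t)^2) (at t)" using dg that \<open>u<t\<close> \<open>t<v\<close> by auto
      have "q t > 0" using qp that \<open>u<t\<close> \<open>t<v\<close> by auto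
      then show "0 \<le> q t * (h t)^2" by simp
    qed
  qed
  have "g a < g b"
  proof (rule ccontr)
    assume "\<not> g a < g b"
    then have eq: "g a = g b" using mono[of a b] ab by auto
    have const: "g y = g a" if "a \<le> y" "y \<le> b" for y
      using mono[of a y] mono[of y b] that eq by auto
    have h0: "h y = 0" if "a < y" "y < b" for y
    proof -
      have "q y * (h y)^2 = 0"
      proof (rule DERIV_local_const)
        show "(g has_real_derivative q y * (h y)^2) (at y)" using dg that by auto
        show "0 < min (y - a) (b - y)" using that by auto
        show "\<forall>z. \<bar>y - z\<bar> < min (y - a) (b - y) \<longrightarrow> g y = g z"
        proof (intro allI impI)
          fix z assume "\<bar>y - z\<bar> < min (y - a) (b - y)"
          then have "a \<le> z" "z \<le> b" by (simp_all add: abs_less_iff)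
          then show "g y = g z" using const[of z] const[of y] that by simp
        qed
      qed
      moreover have "q y > 0" using qp that by simp
      ultimately show ?thesis by simp
    qed
    define m where "m = (a + b) / 2"
    have m: "a < m" "m < b" using ab by (auto simp: m_def)
    have "k m = 0"
    proof (rule DERIV_local_const)
      show "(h has_real_derivative k m) (at m)" using dh m by auto
      show "0 < min (m - a) (b - m)" using m by auto
      show "\<forall>z. \<bar>m - z\<bar> < min (m - a) (b - m) \<longrightarrow> h m = h z"
      proof (intro allI impI)
        fix z assume "\<bar>m - z\<bar> < min (m - a) (b - m)"
        then have "a < z" "z < b" by (simp_all add: abs_less_iff)
        then show "h m = h z" using h0[of z] h0[OF m] by simp
      qed
    qed
    then show False using nz h0[OF m] m by auto
  qed
  then show ?thesis .
qed



lemma Q_eq: "conic_form (osc_conic x y p t) (X, Y) = p t * (X * y t - Y * x t)^2 + (X * deriv y t - Y * deriv x t)^2"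
  by (simp add: conic_form_def osc_conic_def power2_eq_square algebra_simps)

lemma Fderiv:
  assumes dx: "(x has_real_derivative deriv x t) (at t)"
    and dy: "(y has_real_derivative deriv y t) (at t)"
    and dx': "(deriv x has_real_derivative - p t * x t) (at t)"
    and dy': "(deriv y has_real_derivative - p t * y t) (at t)"
    and dp: "(p has_real_derivative p' t) (at t)"
  shows "((\<lambda>t. conic_form (osc_conic x y p t) (X, Y)) has_real_derivative p' t * (X * y t - Y * x t)^2) (at t)"
proof -
  have "((\<lambda>t. p t * (X * y t - Y * x t)^2 + (X * deriv y t - Y * deriv x t)^2) has_real_derivative
      p' t * (X * y t - Y * x t)^2 + p t * (2 * (X * y t - Y * x t) * (X * deriv y t - Y * deriv x t))
      + 2 * (X * deriv y t - Y * deriv x t) * (X * (- p t * y t) - Y * (- p t * x t))) (at t)"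
    by (auto intro!: derivative_eq_intros dx dy dx' dy' dp simp: algebra_simps)
  also have "p' t * (X * y t - Y * x t)^2 + p t * (2 * (X * y t - Y * x t) * (X * deriv y t - Y * deriv x t))
      + 2 * (X * deriv y t - Y * deriv x t) * (X * (- p t * y t) - Y * (- p t * x t)) = p' t * (X * y t - Y * x t)^2"
    by (simp add: algebra_simps)
  finally show ?thesis by (simp add: Q_eq)
qed

lemma nz: assumes "x * y' - y * x' = (1::real)" "X * y - Y * x = 0" "X * y' - Y * x' = 0"
  shows "X = 0 \<and> Y = 0"
proof -
  have "X = 0" using assms by algebra
  moreover have "Y = 0" using assms by algebra
  ultimately show ?thesis by simp
qed

theorem theorem2:
  fixes x y p :: "real \<Rightarrow> real" and I :: "real set"
  assumes I_interval: "is_interval I" and I_open: "open I"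
    and smooth_x: "smooth_on I x" and smooth_y: "smooth_on I y"
    and star: "\<forall>t\<in>I. det2 (x t, y t) (deriv x t, deriv y t) \<noteq> 0"
    and unimodular: "\<forall>t\<in>I. det2 (x t, y t) (deriv x t, deriv y t) = 1"
    and p_def: "\<forall>t\<in>I. deriv (deriv x) t = - p t * x t \<and> deriv (deriv y) t = - p t * y t"
    and p_nonzero: "\<forall>t\<in>I. p t \<noteq> 0"
    and p'_nonzero: "\<forall>t\<in>I. p differentiable (at t) \<and> deriv p t \<noteq> 0"
    and t0: "t0 \<in> I" and t1: "t1 \<in> I" and ne: "t0 \<noteq> t1"
  shows "central_conic (osc_conic x y p t0) \<inter> central_conic (osc_conic x y p t1) = {}
         \<and> nested_conics (osc_conic x y p t0) (osc_conic x y p t1)"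
proof -
  define Q where "Q t z = conic_form (osc_conic x y p t) z" for t z
  have dx: "(x has_real_derivative deriv x t) (at t)" if "t \<in> I" for t
  proof -
    have "(deriv ^^ 0) x differentiable (at t)" using smooth_x that unfolding smooth_on_def by blast
    then show ?thesis by (simp add: DERIV_deriv_iff_real_differentiable)
  qed
  have dy: "(y has_real_derivative deriv y t) (at t)" if "t \<in> I" for t
  proof -
    have "(deriv ^^ 0) y differentiable (at t)" using smooth_y that unfolding smooth_on_def by blast
    then show ?thesis by (simp add: DERIV_deriv_iff_real_differentiable)
  qed
  have dx': "(deriv x has_real_derivative - p t * x t) (at t)" if "t \<in> I" for t
  proof -
    have "(deriv ^^ 1) x differentiable (at t)" using smooth_x that unfolding smooth_on_def by blast
    then have "(deriv x has_real_derivative deriv (deriv x) t) (at t)"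
      by (simp add: DERIV_deriv_iff_real_differentiable)
    then show ?thesis using p_def that by simp
  qed
  have dy': "(deriv y has_real_derivative - p t * y t) (at t)" if "t \<in> I" for t
  proof -
    have "(deriv ^^ 1) y differentiable (at t)" using smooth_y that unfolding smooth_on_def by blast
    then have "(deriv y has_real_derivative deriv (deriv y) t) (at t)"
      by (simp add: DERIV_deriv_iff_real_differentiable)
    then show ?thesis using p_def that by simp
  qed
  have dp: "(p has_real_derivative deriv p t) (at t)" if "t \<in> I" for t
  proof -
    have "p differentiable (at t)" using p'_nonzero that by blast
    then show ?thesis by (simp add: DERIV_deriv_iff_real_differentiable)
  qed
  have dQ: "((\<lambda>t. Q t (X, Y)) has_real_derivative deriv p t * (X * y t - Y * x t)^2) (at t)"
    if "t \<in> I" for t X Y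
    unfolding Q_def by (rule Fderiv[OF dx dy dx' dy' dp]) (use that in auto)
  have dA: "((\<lambda>t. X * y t - Y * x t) has_real_derivative X * deriv y t - Y * deriv x t) (at t)"
    if "t \<in> I" for t X Y
    by (auto intro!: derivative_eq_intros dx dy that)
  have nzA: "\<not> (X * y t - Y * x t = 0 \<and> X * deriv y t - Y * deriv x t = 0)"
    if "t \<in> I" "(X, Y) \<noteq> (0, 0)" for t X Y
  proof
    assume H: "X * y t - Y * x t = 0 \<and> X * deriv y t - Y * deriv x t = 0"
    have "x t * deriv y t - y t * deriv x t = 1" using unimodular that(1) by (simp add: det2_def)
    then have "X = 0 \<and> Y = 0" using nz[of "x t" "deriv y t" "y t" "deriv x t" X Y] H by blast
    then show False using that(2) by simp
  qed
  have sub: "{u..v} \<subseteq> I" if "u \<in> I" "v \<in> I" for u v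
    using I_interval that unfolding is_interval_1 by (meson atLeastAtMost_iff subsetI)
  have sgn: "(\<forall>t\<in>I. deriv p t > 0) \<or> (\<forall>t\<in>I. deriv p t < 0)"
    by (rule sign_const[where g = p and q = "deriv p", OF I_interval]) (use dp p'_nonzero in blast)
  have Q0: "Q t (0, 0) = 0" for t by (simp add: Q_def conic_form_def)
  have cmp: "(\<forall>z. z \<noteq> (0, 0) \<longrightarrow> Q a z < Q b z) \<or> (\<forall>z. z \<noteq> (0, 0) \<longrightarrow> Q b z < Q a z)"
    if ab: "a < b" "a \<in> I" "b \<in> I" for a b
    using sgn
  proof
    assume pos: "\<forall>t\<in>I. deriv p t > 0"
    have "Q a (X, Y) < Q b (X, Y)" if "(X, Y) \<noteq> (0, 0)" for X Y
      by (rule strict_incr[where q = "deriv p" and h = "\<lambda>t. X * y t - Y * x t"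
          and k = "\<lambda>t. X * deriv y t - Y * deriv x t"])
         (use ab(1) in simp, use sub[OF ab(2,3)] dQ in blast, use sub[OF ab(2,3)] pos in blast,
          use sub[OF ab(2,3)] dA in blast, use sub[OF ab(2,3)] nzA that in blast)
    then show ?thesis by auto
  next
    assume neg: "\<forall>t\<in>I. deriv p t < 0"
    have "- Q a (X, Y) < - Q b (X, Y)" if "(X, Y) \<noteq> (0, 0)" for X Y
    proof (rule strict_incr[where g = "\<lambda>t. - Q t (X, Y)" and q = "\<lambda>t. - deriv p t" and h = "\<lambda>t. X * y t - Y * x t"
          and k = "\<lambda>t. X * deriv y t - Y * deriv x t"])
      show "\<forall>t\<in>{a..b}. ((\<lambda>t. - Q t (X, Y)) has_real_derivative - deriv p t * (X * y t - Y * x t)\<^sup>2) (at t)"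
      proof
        fix t assume "t \<in> {a..b}"
        then have "t \<in> I" using sub[OF ab(2,3)] by blast
        from DERIV_minus[OF dQ[OF this, of X Y]]
        show "((\<lambda>t. - Q t (X, Y)) has_real_derivative - deriv p t * (X * y t - Y * x t)\<^sup>2) (at t)"
          by simp
      qed
    qed (use ab(1) in simp, use sub[OF ab(2,3)] neg in force,
          use sub[OF ab(2,3)] dA in blast, use sub[OF ab(2,3)] nzA that in blast)
    then show ?thesis by auto
  qed
  have fin: "central_conic (osc_conic x y p a) \<inter> central_conic (osc_conic x y p b) = {}
         \<and> nested_conics (osc_conic x y p a) (osc_conic x y p b)"
    if H: "\<forall>z. z \<noteq> (0, 0) \<longrightarrow> Q a z < Q b z" for a b
  proof -
    have le: "Q a z \<le> Q b z" for z
    proof (cases "z = (0,0)")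
      case True then show ?thesis using Q0 by simp
    next
      case False then show ?thesis using H less_imp_le by blast
    qed
    have "central_conic (osc_conic x y p a) \<inter> central_conic (osc_conic x y p b) = {}"
    proof (rule ccontr)
      assume "\<not> ?thesis"
      then obtain z where "z \<in> central_conic (osc_conic x y p a)" "z \<in> central_conic (osc_conic x y p b)" by blast
      then have z1: "Q a z = 1" and z2: "Q b z = 1" by (simp_all add: central_conic_def Q_def)
      have "z \<noteq> (0, 0)"
      proof
        assume "z = (0, 0)"
        then have "Q a z = 0" using Q0[of a] by simp
        then show False using z1 by simp
      qed
      then have "Q a z < Q b z" using H by blast
      then show False using z1 z2 by simp
    qed
    moreover have "nested_conics (osc_conic x y p a) (osc_conic x y p b)"
      unfolding nested_conics_def
    proof (rule disjI1, rule subsetI)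
      fix z assume "z \<in> {z. 1 \<le> conic_form (osc_conic x y p a) z}"
      then have "1 \<le> Q a z" by (simp add: Q_def)
      then have "1 \<le> Q b z" using le[of z] by linarith
      then show "z \<in> {z. 1 \<le> conic_form (osc_conic x y p b) z}" by (simp add: Q_def)
    qed
    ultimately show ?thesis by (rule conjI)
  qed
  have sym: "nested_conics C D \<Longrightarrow> nested_conics D C" for C D
    unfolding nested_conics_def by blast
  have both: "central_conic (osc_conic x y p t0) \<inter> central_conic (osc_conic x y p t1) = {}
         \<and> nested_conics (osc_conic x y p t0) (osc_conic x y p t1)"
    if "(\<forall>z. z \<noteq> (0, 0) \<longrightarrow> Q t0 z < Q t1 z) \<or> (\<forall>z. z \<noteq> (0, 0) \<longrightarrow> Q t1 z < Q t0 z)"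
    using that
  proof
    assume "\<forall>z. z \<noteq> (0, 0) \<longrightarrow> Q t0 z < Q t1 z"
    then show ?thesis by (rule fin)
  next
    assume "\<forall>z. z \<noteq> (0, 0) \<longrightarrow> Q t1 z < Q t0 z"
    then have F: "central_conic (osc_conic x y p t1) \<inter> central_conic (osc_conic x y p t0) = {}
         \<and> nested_conics (osc_conic x y p t1) (osc_conic x y p t0)" by (rule fin)
    then have "central_conic (osc_conic x y p t0) \<inter> central_conic (osc_conic x y p t1) = {}"
      by (simp add: Int_commute)
    moreover have "nested_conics (osc_conic x y p t0) (osc_conic x y p t1)"
      using F sym by blast
    ultimately show ?thesis by (rule conjI)
  qed
  consider "t0 < t1" | "t1 < t0" using ne by fastforce
  then show ?thesis
  proof cases
    case 1
    show ?thesis by (rule both) (rule cmp[OF 1 t0 t1])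
  next
    case 2
    have "(\<forall>z. z \<noteq> (0, 0) \<longrightarrow> Q t1 z < Q t0 z) \<or> (\<forall>z. z \<noteq> (0, 0) \<longrightarrow> Q t0 z < Q t1 z)"
      by (rule cmp[OF 2 t1 t0])
    then show ?thesis using both by blast
  qed
qed

end
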